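(* Let $f:\mathbb{R}^2\setminus\{y=0\}\to\mathbb{R}^2$ be the Hénon–Devaney map $f(x,y)=\left(x+\frac1y,\ y-\frac1y-x\right)$. Then the hyperbolic periodic points of $f$ are dense in $\mathbb{R}^2$. *)

theory Defs
  imports "HOL-Analysis.Analysis"
begin

text \<open>The Henon--Devaney map, f(x,y) = (x + 1/y, y - 1/y - x), defined on the
  plane minus the line y = 0. As a HOL function it is total; values on y = 0 are
  irrelevant because all notions below require the orbit to avoid y = 0.\<close>
definition henon_devaney :: "real \<times> real \<Rightarrow> real \<times> real" where
  "henon_devaney p = (fst p + 1 / snd p, snd p - 1 / snd p - fst p)"

definition is_complex_eigenvalue :: "(real \<times> real \<Rightarrow> real \<times> real) \<Rightarrow> complex \<Rightarrow> bool" where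
  "is_complex_eigenvalue L mu \<longleftrightarrow>
     (let a11 = complex_of_real (fst (L (1, 0))); a21 = complex_of_real (snd (L (1, 0)));
          a12 = complex_of_real (fst (L (0, 1))); a22 = complex_of_real (snd (L (0, 1)))
      in \<exists>v1 v2 :: complex. (v1, v2) \<noteq> (0, 0) \<and>
           a11 * v1 + a12 * v2 = mu * v1 \<and> a21 * v1 + a22 * v2 = mu * v2)"

definition periodic_point :: "nat \<Rightarrow> real \<times> real \<Rightarrow> bool" where
  "periodic_point n p \<longleftrightarrow> n > 0 \<and> (\<forall>k<n. snd ((henon_devaney ^^ k) p) \<noteq> 0)
      \<and> (henon_devaney ^^ n) p = p"

definition hyperbolic_periodic_point :: "real \<times> real \<Rightarrow> bool" where
  "hyperbolic_periodic_point p \<longleftrightarrow> (\<exists>n L. periodic_point n p \<and>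
      ((henon_devaney ^^ n) has_derivative L) (at p) \<and>
      (\<forall>mu. is_complex_eigenvalue L mu \<longrightarrow> cmod mu \<noteq> 1))"

end

theory Submission
  imports Defs
begin

abbreviation HD where "HD \<equiv> henon_devaney"

lemma hd_deriv:
  assumes "snd q \<noteq> 0"
  shows "(henon_devaney has_derivative
     (\<lambda>h. (fst h - snd h / (snd q)^2, snd h + snd h / (snd q)^2 - fst h))) (at q)"
  unfolding henon_devaney_def[abs_def]
  apply (rule has_derivative_eq_rhs)
   apply (rule derivative_eq_intros | use assms in simp)+
  apply (auto simp: fun_eq_iff power2_eq_square field_simps)
  done

definition good :: "real \<Rightarrow> real \<Rightarrow> real \<Rightarrow> real \<Rightarrow> bool" where
  "good p q r s \<longleftrightarrow> q \<le> 0 \<and> 0 \<le> q + s - p - r \<and> 0 \<le> q + s \<and> p - q > 1 \<and> p * s - q * r = 1"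

lemma good_one: "c > 0 \<Longrightarrow> good 1 (-c) (-1) (1+c)"
  unfolding good_def by (auto simp: algebra_simps)

lemma good_step:
  assumes "good p q r s" "c \<ge> 0"
  shows "good (p - c * r) (q - c * s) (-p + (1+c) * r) (-q + (1+c) * s)"
proof -
  have a: "q \<le> 0" "0 \<le> q + s - p - r" "0 \<le> q + s" "p - q > 1" "p * s - q * r = 1"
    using assms(1) unfolding good_def by auto
  have s0: "s - r \<ge> 0" using a by linarith
  have "s \<ge> 0" using a by linarith
  then have m4: "c * s \<ge> 0" using assms(2) by simp
  have m1: "c * (q + s - p - r) \<ge> 0" using a assms(2) by simp
  have m2: "c * (s - r) \<ge> 0" using s0 assms(2) by simp
  have m3: "c * (q + s) \<ge> 0" using a assms(2) by simp
  have g1: "q - c * s \<le> 0" using a m4 by (simp add: algebra_simps)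
  have g2: "0 \<le> (q - c * s) + (-q + (1+c) * s) - (p - c * r) - (-p + (1+c) * r)"
    using s0 by (simp add: algebra_simps)
  have g3: "0 \<le> (q - c * s) + (-q + (1+c) * s)" using a by (simp add: algebra_simps)
  have g4: "(p - c * r) - (q - c * s) > 1" using a m2 by (simp add: algebra_simps)
  have g5: "(p - c * r) * (-q + (1+c) * s) - (q - c * s) * (-p + (1+c) * r) = 1"
    using a(5) by (simp add: algebra_simps)
  show ?thesis unfolding good_def using g1 g2 g3 g4 g5 by blast
qed

lemma good_trace:
  assumes "good p q r s"
  shows "p + s > 2"
proof -
  have a: "q \<le> 0" "0 \<le> q + s - p - r" "0 \<le> q + s" "p - q > 1" "p * s - q * r = 1"
    using assms(1) unfolding good_def by auto
  define x where "x = q + s"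
  define y where "y = p - q"
  have "x * y - 1 = - q * (q + s - p - r)" using a unfolding x_def y_def by (simp add: algebra_simps)
  moreover have "- q * (q + s - p - r) \<ge> 0" using a by (simp add: mult_nonpos_nonneg)
  ultimately have xy: "x * y \<ge> 1" by linarith
  have "x \<ge> 0" "y > 1" using a x_def y_def by auto
  show ?thesis
  proof (rule ccontr)
    assume "\<not> ?thesis"
    then have "x + y \<le> 2" unfolding x_def y_def by simp
    then have "x * y \<le> x * (2 - x)" using \<open>x \<ge> 0\<close> by (intro mult_left_mono) auto
    moreover have "x * (2 - x) = 1 - (1 - x)^2" by (simp add: power2_eq_square algebra_simps)
    moreover have "(1 - x)^2 > 0" using \<open>x + y \<le> 2\<close> \<open>y > 1\<close> by auto
    ultimately show False using xy by linarith
  qed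
qed

lemma eig_lemma:
  fixes p q r s :: real
  assumes det: "p * s - q * r = 1" and tr: "p + s > 2"
    and ev: "is_complex_eigenvalue (\<lambda>h. (p * fst h + q * snd h, r * fst h + s * snd h)) mu"
  shows "cmod mu \<noteq> 1"
proof
  assume m1: "cmod mu = 1"
  from ev obtain v1 v2 :: complex where nz: "(v1, v2) \<noteq> (0, 0)"
    and e1: "of_real p * v1 + of_real q * v2 = mu * v1"
    and e2: "of_real r * v1 + of_real s * v2 = mu * v2"
    unfolding is_complex_eigenvalue_def Let_def by auto
  define X where "X = (of_real p - mu) * (of_real s - mu) - of_real q * of_real r"
  have h1: "v1 * X = 0" using e1 e2 unfolding X_def by algebra
  have h2: "v2 * X = 0" using e1 e2 unfolding X_def by algebra
  have X0: "X = 0" using h1 h2 nz by auto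
  have "of_real (p * s - q * r) - of_real (p + s) * mu + mu^2 = 0"
    using X0 unfolding X_def by (simp add: algebra_simps power2_eq_square)
  then have ch: "1 - of_real (p + s) * mu + mu^2 = 0" using det by simp
  have re: "1 - (p + s) * Re mu + (Re mu)^2 - (Im mu)^2 = 0"
    using arg_cong[OF ch, of Re] by (simp add: power2_eq_square)
  have im: "Im mu = 0 \<or> 2 * Re mu = p + s"
    using arg_cong[OF ch, of Im] by (simp add: power2_eq_square)
  have n1: "(Re mu)^2 + (Im mu)^2 = 1" using m1 unfolding cmod_def
    by (metis one_power2 real_sqrt_eq_1_iff)
  show False
  proof (cases "Im mu = 0")
    case True
    then have "(Re mu)^2 = 1" using n1 by simp
    then have "Re mu = 1 \<or> Re mu = -1" by (simp add: power2_eq_1_iff)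
    then show False using re True tr by auto
  next
    case False
    then have "p + s = 2 * Re mu" using im by simp
    moreover have "Re mu \<le> 1" using n1
      by (metis abs_le_D1 abs_Re_le_cmod m1)
    ultimately show False using tr by simp
  qed
qed
lemma iter_deriv:
  "(\<forall>i<n. snd ((HD^^i) p) \<noteq> 0) \<Longrightarrow> \<exists>a b c d.
     ((HD^^n) has_derivative (\<lambda>h. (a * fst h + b * snd h, c * fst h + d * snd h))) (at p)
     \<and> a * d - b * c = 1 \<and> (n > 0 \<longrightarrow> good a b c d)"
proof (induction n)
  case 0
  have "((\<lambda>x. x) has_derivative (\<lambda>h. (1 * fst h + 0 * snd h, 0 * fst h + 1 * snd h))) (at p)"
    by (rule has_derivative_eq_rhs[OF has_derivative_ident]) (simp add: fun_eq_iff)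
  then show ?case by (intro exI[of _ 1] exI[of _ 0]) (simp add: id_def)
next
  case (Suc n)
  then obtain a b c d where L: "((HD^^n) has_derivative (\<lambda>h. (a * fst h + b * snd h, c * fst h + d * snd h))) (at p)"
    and det: "a * d - b * c = 1" and g: "n > 0 \<longrightarrow> good a b c d" by auto
  define q where "q = (HD^^n) p"
  have qn: "snd q \<noteq> 0" using Suc.prems q_def by auto
  define cc where "cc = 1 / (snd q)^2"
  have cc: "cc > 0" using qn cc_def by simp
  have D: "((\<lambda>x. HD ((HD^^n) x)) has_derivative
     (\<lambda>h. ((a - cc * c) * fst h + (b - cc * d) * snd h, (-a + (1+cc) * c) * fst h + (-b + (1+cc) * d) * snd h))) (at p)"
    apply (rule has_derivative_eq_rhs)
     apply (rule has_derivative_compose[OF L hd_deriv])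
    using qn q_def apply simp
    using qn apply (simp add: fun_eq_iff cc_def field_simps flip: q_def)
    done
  have gn: "good (a - cc * c) (b - cc * d) (-a + (1+cc) * c) (-b + (1+cc) * d)"
  proof (cases "n = 0")
    case True
    then have "a = 1" "b = 0" "c = 0" "d = 1"
    proof -
      have "(\<lambda>h::real\<times>real. (a * fst h + b * snd h, c * fst h + d * snd h)) = (\<lambda>h. (1 * fst h + 0 * snd h, 0 * fst h + 1 * snd h))"
      proof (rule has_derivative_unique[OF L])
        have I0: "((\<lambda>x. x) has_derivative (\<lambda>h. (1 * fst h + 0 * snd h, 0 * fst h + 1 * snd h))) (at p)"
          by (rule has_derivative_eq_rhs[OF has_derivative_ident]) (simp add: fun_eq_iff)
        have "(HD^^n) = (\<lambda>x. x)" using True by (simp add: id_def)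
        then show "((HD^^n) has_derivative (\<lambda>h. (1 * fst h + 0 * snd h, 0 * fst h + 1 * snd h))) (at p)"
          using I0 by simp
      qed
      then have "\<And>h::real\<times>real. (a * fst h + b * snd h, c * fst h + d * snd h) = (fst h, snd h)" by (simp add: fun_eq_iff)
      from this[of "(1,0)"] this[of "(0,1)"] show "a = 1" "b = 0" "c = 0" "d = 1" by auto
    qed
    then show ?thesis using good_one[OF cc] by simp
  next
    case False
    then show ?thesis using good_step[of a b c d cc] g cc by auto
  qed
  show ?case
    apply (rule exI[of _ "a - cc * c"], rule exI[of _ "b - cc * d"], rule exI[of _ "-a + (1+cc) * c"], rule exI[of _ "-b + (1+cc) * d"])
    using D gn unfolding good_def by (simp add: o_def)
qed

lemma periodic_hyperbolic:
  assumes "periodic_point n p"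
  shows "hyperbolic_periodic_point p"
proof -
  have n: "n > 0" "\<forall>k<n. snd ((HD ^^ k) p) \<noteq> 0" using assms unfolding periodic_point_def by auto
  obtain a b c d where L: "((HD^^n) has_derivative (\<lambda>h. (a * fst h + b * snd h, c * fst h + d * snd h))) (at p)"
    and det: "a * d - b * c = 1" and g: "good a b c d" using iter_deriv[OF n(2)] n(1) by auto
  have "a + d > 2" using good_trace[OF g] .
  then show ?thesis unfolding hyperbolic_periodic_point_def
    using assms L eig_lemma[OF det] by blast
qed

definition recur :: "(int \<Rightarrow> real) \<Rightarrow> bool" where
  "recur y \<longleftrightarrow> (\<forall>n. y (n+1) + y (n-1) = 2 * y n - 1 / y n)"

lemma HD_fst: "fst (HD q) = snd q - snd (HD q)"
  unfolding henon_devaney_def by simp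

lemma HD_snd: "snd (HD q) = 2 * snd q - (fst q + snd q) - 1 / snd q"
  unfolding henon_devaney_def by simp

lemma iter_snd2: "snd ((HD^^(Suc (Suc k))) q) = 2 * snd ((HD^^(Suc k)) q) - snd ((HD^^k) q) - 1 / snd ((HD^^(Suc k)) q)"
proof -
  define r where "r = (HD^^(Suc k)) q"
  have r2: "(HD^^(Suc (Suc k))) q = HD r" unfolding r_def by simp
  have r1: "r = HD ((HD^^k) q)" unfolding r_def by simp
  have "fst r = snd ((HD^^k) q) - snd r" unfolding r1 by (rule HD_fst)
  then show ?thesis unfolding r2 HD_snd by (simp add: r_def)
qed

lemma iter_snd1: "snd ((HD^^(Suc 0)) q) = 2 * snd q - (fst q + snd q) - 1 / snd q"
  by (simp add: HD_snd)

definition rho :: "real \<times> real \<Rightarrow> real \<times> real" where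
  "rho p = (- fst p, fst p + snd p)"

definition orb :: "real \<times> real \<Rightarrow> int \<Rightarrow> real" where
  "orb p n = (if n \<ge> 0 then snd ((HD^^nat n) p) else snd ((HD^^nat (-1-n)) (rho p)))"

lemma orb_m1: "orb p (-1) = fst p + snd p" by (simp add: orb_def rho_def)
lemma orb_0: "orb p 0 = snd p" by (simp add: orb_def)

lemma orb_recur: "recur (orb p)"
  unfolding recur_def
proof
  fix n :: int
  consider "n \<ge> 1" | "n = 0" | "n = -1" | "n \<le> -2" by linarith
  then show "orb p (n + 1) + orb p (n - 1) = 2 * orb p n - 1 / orb p n"
  proof cases
    case 1
    define k where "k = nat (n - 1)"
    have e: "nat (n+1) = Suc (Suc k)" "nat n = Suc k" "nat (n - 1) = k" using 1 k_def by auto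
    show ?thesis using 1 unfolding orb_def e by (simp add: e iter_snd2 del: funpow.simps)
  next
    case 2
    then show ?thesis using iter_snd1[of p] unfolding orb_def by (simp add: rho_def)
  next
    case 3
    then show ?thesis using iter_snd1[of "rho p"] unfolding orb_def by (simp add: rho_def)
  next
    case 4
    define k where "k = nat (-2 - n)"
    have e: "nat (-2 - n) = k" "nat (-1 - n) = Suc k" "nat (- n) = Suc (Suc k)" using 4 k_def by auto
    show ?thesis using 4 unfolding orb_def by (simp add: e iter_snd2 del: funpow.simps)
  qed
qed

lemma sol_iter:
  assumes r: "recur s"
  shows "(HD^^k) (s (-1) - s 0, s 0) = (s (int k - 1) - s (int k), s (int k))"
proof (induction k)
  case 0
  then show ?case by simp
next
  case (Suc k)
  have rk: "s (int k + 1) + s (int k - 1) = 2 * s (int k) - 1 / s (int k)" using r unfolding recur_def by blast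
  show ?case using Suc unfolding henon_devaney_def
    by (simp add: algebra_simps) (use rk in \<open>simp add: algebra_simps\<close>)
qed

lemma sol_periodic_point:
  assumes r: "recur s" and nz: "\<forall>n. s n \<noteq> 0" and P: "P > 0" and per: "\<forall>n. s (n + P) = s n"
  shows "periodic_point (nat P) (s (-1) - s 0, s 0)"
  unfolding periodic_point_def
proof (intro conjI allI impI)
  show "0 < nat P" using P by simp
  fix k assume "k < nat P"
  show "snd ((HD ^^ k) (s (- 1) - s 0, s 0)) \<noteq> 0" using sol_iter[OF r] nz by simp
next
  have "s (P - 1) = s (-1)" using per[rule_format, of "-1"] by simp
  moreover have "s P = s 0" using per[rule_format, of 0] by simp
  ultimately show "(HD ^^ nat P) (s (- 1) - s 0, s 0) = (s (- 1) - s 0, s 0)"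
    using sol_iter[OF r, of "nat P"] P by simp
qed

definition Nop :: "(int \<Rightarrow> real) \<Rightarrow> int \<Rightarrow> real" where
  "Nop z n = 2 * z n - z (n+1) - z (n-1) - 1 / z n"

lemma recur_Nop: "recur z \<longleftrightarrow> (\<forall>n. Nop z n = 0)"
  unfolding recur_def Nop_def by (auto simp: algebra_simps)

lemma neg_sq: "x \<le> b \<Longrightarrow> y \<le> b \<Longrightarrow> b < 0 \<Longrightarrow> b * b \<le> (x * y :: real)"
proof -
  assume h: "x \<le> b" "y \<le> b" "b < 0"
  have "x * (y - b) \<ge> 0" using h by (intro mult_nonpos_nonpos) auto
  moreover have "b * (x - b) \<ge> 0" using h by (intro mult_nonpos_nonpos) auto
  ultimately show ?thesis by (simp add: algebra_simps)
qed

lemma per_mult: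
  fixes f :: "int \<Rightarrow> real" and P n k :: int
  assumes "\<forall>n. f (n + P) = (f n :: real)"
  shows "f (n + P * k) = f n"
proof -
  have pos: "f (m + P * int j) = f m" for m j
    by (induction j) (auto simp: algebra_simps assms[rule_format, of "m + P * int _", simplified algebra_simps])
  show ?thesis
  proof (cases "k \<ge> 0")
    case True then show ?thesis using pos[of n "nat k"] by simp
  next
    case False
    have "f (n + P * k + P * int (nat (-k))) = f (n + P * k)" by (rule pos)
    then show ?thesis using False by (simp add: algebra_simps)
  qed
qed

lemma per_mod:
  fixes f :: "int \<Rightarrow> real" and P n m :: int
  assumes "\<forall>n. f (n + P) = (f n :: real)" "(m - n) mod P = 0"
  shows "f m = f n"
proof -
  have "m = n + P * ((m - n) div P)" using assms(2)
    by (metis add.commute diff_add_cancel minus_mod_eq_mult_div mult.commute diff_zero)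
  then show ?thesis using per_mult[OF assms(1), of n "(m - n) div P"] by simp
qed

lemma sandwich:
  fixes a b :: "int \<Rightarrow> real" and P :: int
  assumes P: "P > 0"
    and pa: "\<forall>n. a (n + P) = a n" and pb: "\<forall>n. b (n + P) = b n"
    and ab: "\<forall>n. a n \<le> b n"
    and sg: "\<forall>n. a n > 0 \<or> b n < 0"
    and sa: "\<forall>n. Nop a n \<le> 0" and sb: "\<forall>n. Nop b n \<ge> 0"
  shows "\<exists>s. (\<forall>n. s (n + P) = s n) \<and> (\<forall>n. a n \<le> s n \<and> s n \<le> b n) \<and> recur s"
proof -
  define S where "S = {z. (\<forall>n. z (n + P) = z n) \<and> (\<forall>n. a n \<le> z n \<and> z n \<le> b n) \<and> (\<forall>n. Nop z n \<le> 0)}"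
  define s where "s n = Sup ((\<lambda>z. z n) ` S)" for n
  have aS: "a \<in> S" unfolding S_def using pa ab sa by auto
  have ne: "(\<lambda>z. z n) ` S \<noteq> {}" for n using aS by auto
  have bdd: "bdd_above ((\<lambda>z. z n) ` S)" for n
    unfolding bdd_above_def S_def by auto
  have zs: "z \<in> S \<Longrightarrow> z n \<le> s n" for z n
    unfolding s_def by (rule cSup_upper) (auto intro: bdd)
  have sb_le: "s n \<le> b n" for n
    unfolding s_def by (rule cSup_least[OF ne]) (auto simp: S_def)
  have as_le: "a n \<le> s n" for n using zs[OF aS] .
  have sper: "s (n + P) = s n" for n
  proof -
    have "(\<lambda>z. z (n + P)) ` S = (\<lambda>z. z n) ` S"
      by (rule image_cong) (auto simp: S_def)
    then show ?thesis unfolding s_def by simp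
  qed
  define m where "m n = (if a n > 0 then a n else b n)" for n
  have msq: "m n \<noteq> 0 \<and> (\<forall>x y. a n \<le> x \<longrightarrow> x \<le> b n \<longrightarrow> a n \<le> y \<longrightarrow> y \<le> b n \<longrightarrow> x * y \<ge> (m n)^2)" for n
  proof (cases "a n > 0")
    case True
    then show ?thesis unfolding m_def using True
      by (auto simp: power2_eq_square intro!: mult_mono)
  next
    case False
    then have "b n < 0" using sg by auto
    then show ?thesis unfolding m_def using False
      by (auto simp: power2_eq_square intro!: neg_sq)
  qed
  have snz: "s n \<noteq> 0" for n using sg[rule_format, of n] as_le[of n] sb_le[of n] by auto
  have sm: "s n * s n \<ge> (m n)^2" "z n * s n \<ge> (m n)^2" if "z \<in> S" for z n
    using msq[of n] as_le[of n] sb_le[of n] zs[OF that, of n] that unfolding S_def by auto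
  have Nle: "Nop s n \<le> 0" for n
  proof (rule field_le_epsilon)
    fix e :: real assume e: "e > 0"
    define K where "K = 2 + 1 / (m n)^2"
    have K: "K > 0" unfolding K_def by (simp add: add_pos_nonneg)
    have "s n - e / K < s n" using e K by simp
    then obtain w where w: "w \<in> (\<lambda>z. z n) ` S" "s n - e / K < w"
      using less_cSup_iff[OF ne bdd] unfolding s_def by blast
    then obtain z where z: "z \<in> S" "z n > s n - e / K" by auto
    have zle: "z n \<le> s n" using zs[OF z(1)] .
    have Nz: "Nop z n \<le> 0" using z(1) unfolding S_def by auto
    have nb: "z (n+1) \<le> s (n+1)" "z (n-1) \<le> s (n-1)" using zs[OF z(1)] by auto
    have zsq: "z n * s n \<ge> (m n)^2" using sm(2)[OF z(1)] .
    have mpos: "(m n)^2 > 0" using msq[of n] by simp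
    have zp: "z n * s n > 0" using zsq mpos by linarith
    have zn0: "z n \<noteq> 0" "s n \<noteq> 0" using zp by auto
    have "1 / z n - 1 / s n = (s n - z n) / (z n * s n)"
      using zn0 by (simp add: field_simps)
    also have "\<dots> \<le> (s n - z n) / (m n)^2"
      using zle zsq mpos zp by (intro divide_left_mono) auto
    finally have inv: "1 / z n - 1 / s n \<le> (s n - z n) / (m n)^2" .
    have "Nop s n \<le> Nop z n + 2 * (s n - z n) + (1 / z n - 1 / s n)"
      unfolding Nop_def using nb by simp
    also have "\<dots> \<le> 0 + (s n - z n) * K" using Nz inv unfolding K_def by (simp add: algebra_simps)
    also have "\<dots> \<le> e" using z(2) K by (simp add: field_simps)
    finally show "Nop s n \<le> 0 + e" by simp
  qed
  have Neq: "Nop s n = 0" for n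
  proof (rule ccontr)
    assume "Nop s n \<noteq> 0"
    then have neg: "Nop s n < 0" using Nle[of n] by simp
    have slt: "s n < b n"
    proof (rule ccontr)
      assume "\<not> s n < b n"
      then have eq: "s n = b n" using sb_le[of n] by simp
      have "Nop b n \<le> Nop s n" unfolding Nop_def using eq sb_le[of "n+1"] sb_le[of "n-1"] by simp
      then show False using neg sb by (meson not_le order_trans)
    qed
    define t where "t = min (b n - s n) (min (\<bar>s n\<bar> / 2) (- Nop s n / (2 * (2 + 2 / (s n)^2))))"
    have den: "2 * (2 + 2 / (s n)^2) > 0" by (simp add: add_pos_nonneg)
    have "- Nop s n / (2 * (2 + 2 / (s n)^2)) > 0" using neg den by (intro divide_pos_pos) auto
    then have tpos: "t > 0" unfolding t_def using slt snz[of n] by auto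
    define z where "z k = s k + (if (k - n) mod P = 0 then t else 0)" for k
    have zper: "z (k + P) = z k" for k
    proof -
      have "(k + P - n) mod P = (k - n) mod P"
        by (metis add.commute add_diff_eq mod_add_self2)
      then show ?thesis unfolding z_def using sper[of k] by simp
    qed
    have zge: "s k \<le> z k" for k unfolding z_def using tpos by simp
    have "z \<in> S"
      unfolding S_def
    proof (intro CollectI conjI allI)
      fix k
      show "z (k + P) = z k" by (rule zper)
      show "a k \<le> z k" using as_le[of k] zge[of k] by simp
      show "z k \<le> b k"
      proof (cases "(k - n) mod P = 0")
        case True
        have "s k = s n" using per_mod[of s P k n] sper True by auto
        moreover have "b k = b n" using per_mod[of b P k n] pb True by auto
        ultimately show ?thesis unfolding z_def using True t_def by auto
      next
        case False
        then show ?thesis unfolding z_def using sb_le[of k] by simp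
      qed
      show "Nop z k \<le> 0"
      proof (cases "(k - n) mod P = 0")
        case True
        have e1: "s k = s n" using per_mod[of s P k n] sper True by auto
        have e2: "s (k+1) = s (n+1)" using per_mod[of s P "k+1" "n+1"] sper True by (auto simp: algebra_simps)
        have e3: "s (k-1) = s (n-1)" using per_mod[of s P "k-1" "n-1"] sper True by (auto simp: algebra_simps)
        have zk: "z k = s n + t" unfolding z_def using True e1 by simp
        have bnd: "1 / s n - 1 / (s n + t) \<le> 2 * t / (s n)^2"
        proof -
          have t2: "t \<le> \<bar>s n\<bar> / 2" unfolding t_def by (meson min.cobounded1 min.cobounded2 order_trans)
          have prod: "s n * (s n + t) \<ge> (s n)^2 / 2"
          proof (cases "s n > 0")
            case True then show ?thesis using tpos by (simp add: power2_eq_square algebra_simps)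
          next
            case False
            then have "s n < 0" using snz[of n] by simp
            moreover have "s n / 2 + t \<le> 0" using t2 \<open>s n < 0\<close> by simp
            ultimately have "s n * (s n / 2 + t) \<ge> 0" by (intro mult_nonpos_nonpos) auto
            then show ?thesis by (simp add: power2_eq_square algebra_simps)
          qed
          have sq: "(s n)^2 > 0" using snz by simp
          have pp: "s n * (s n + t) > 0" using prod sq by linarith
          have nz2: "s n + t \<noteq> 0" "s n \<noteq> 0" using pp by auto
          have "1 / s n - 1 / (s n + t) = t / (s n * (s n + t))"
            using nz2 by (simp add: field_simps)
          also have "\<dots> \<le> t / ((s n)^2 / 2)"
            using prod sq tpos pp by (intro divide_left_mono) auto
          also have "\<dots> = 2 * t / (s n)^2" by simp
          finally show ?thesis .
        qed
        have t3: "t \<le> - Nop s n / (2 * (2 + 2 / (s n)^2))" unfolding t_def by (meson min.cobounded1 min.cobounded2 order_trans)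
        have Kp: "2 * (2 + 2 / (s n)^2) > 0" by (simp add: add_pos_nonneg)
        have t4: "t * (2 + 2 / (s n)^2) \<le> - Nop s n / 2"
          using t3 Kp by (simp add: field_simps)
        have "Nop z k \<le> 2 * (s n + t) - s (n+1) - s (n-1) - 1 / (s n + t)"
          unfolding Nop_def zk using zge[of "k+1"] zge[of "k-1"] e2 e3 by simp
        also have "\<dots> = Nop s n + 2 * t + (1 / s n - 1 / (s n + t))" unfolding Nop_def by simp
        also have "\<dots> \<le> Nop s n + 2 * t + 2 * t / (s n)^2" using bnd by simp
        also have "\<dots> = Nop s n + t * (2 + 2 / (s n)^2)" by (simp add: algebra_simps)
        also have "\<dots> \<le> 0" using t4 neg by simp
        finally show ?thesis .
      next
        case False
        then have zk: "z k = s k" unfolding z_def by simp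
        have "Nop z k \<le> Nop s k" unfolding Nop_def zk using zge[of "k+1"] zge[of "k-1"] by simp
        then show ?thesis using Nle[of k] by simp
      qed
    qed
    then have "z n \<le> s n" by (rule zs)
    then show False unfolding z_def using tpos by simp
  qed
  show ?thesis
    apply (rule exI[of _ s])
    using sper as_le sb_le Neq recur_Nop by blast
qed

lemma recur_neg: "recur y \<Longrightarrow> recur (\<lambda>n. - y n)"
  unfolding recur_def by (auto simp: algebra_simps)

lemma recur_rev: "recur y \<Longrightarrow> recur (\<lambda>n. y (-1 - n))"
  unfolding recur_def
proof
  fix n assume r: "\<forall>n. y (n + 1) + y (n - 1) = 2 * y n - 1 / y n"
  have "y ((-1-n) + 1) + y ((-1-n) - 1) = 2 * y (-1-n) - 1 / y (-1-n)" using r by blast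
  then show "y (- 1 - (n + 1)) + y (- 1 - (n - 1)) = 2 * y (- 1 - n) - 1 / y (- 1 - n)"
    by (simp add: algebra_simps)
qed

lemma no_pos_forever_nat:
  fixes z :: "nat \<Rightarrow> real"
  assumes r: "\<forall>k. z (k+2) + z k = 2 * z (k+1) - 1 / z (k+1)" and pos: "\<forall>k. z k > 0"
  shows False
proof -
  define E where "E k = z (k+1) - z k" for k
  have Estep: "E (k+1) = E k - 1 / z (k+1)" for k
    using r[rule_format, of k] unfolding E_def by (simp add: algebra_simps)
  have Emono: "E (k + m) \<le> E k" for k m
  proof (induction m)
    case 0 then show ?case by simp
  next
    case (Suc m)
    have "E (k + Suc m) = E (k + m) - 1 / z (k + m + 1)" using Estep[of "k+m"] by simp
    also have "\<dots> \<le> E (k + m)" using pos[rule_format, of "k+m+1"] by simp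
    finally show ?case using Suc by simp
  qed
  have zb: "z (k + m) \<le> z k + real m * E k" for k m
  proof (induction m)
    case 0 then show ?case by simp
  next
    case (Suc m)
    have "z (k + Suc m) = z (k + m) + E (k + m)" unfolding E_def by simp
    also have "\<dots> \<le> z k + real m * E k + E k" using Suc Emono[of k m] by simp
    finally show ?case by (simp add: algebra_simps)
  qed
  show False
  proof (cases "\<exists>j. E j < 0")
    case True
    then obtain j where j: "E j < 0" by blast
    obtain m where m: "z j < real m * (- E j)" using reals_Archimedean3[of "- E j"] j by auto
    have "z (j + m) \<le> z j + real m * E j" by (rule zb)
    also have "\<dots> < 0" using m by (simp add: algebra_simps)
    finally show False using pos[rule_format, of "j+m"] by simp
  next
    case False
    then have Enn: "E j \<ge> 0" for j by (simp add: not_less)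
    define C where "C = z 0 + E 0"
    have C: "C > 0" unfolding C_def using pos Enn[of 0] by (simp add: add_pos_nonneg)
    have zC: "z (Suc i) \<le> real (Suc i) * C" for i
    proof -
      have "z (0 + Suc i) \<le> z 0 + real (Suc i) * E 0" by (rule zb)
      also have "\<dots> \<le> real (Suc i) * z 0 + real (Suc i) * E 0"
        using pos[rule_format, of 0] by (simp add: algebra_simps)
      finally show ?thesis unfolding C_def by (simp add: algebra_simps)
    qed
    have Esum: "E 0 - E m = (\<Sum>i<m. 1 / z (Suc i))" for m
      by (induction m) (auto simp: Estep[simplified])
    have hb: "harm m / C \<le> E 0" for m
    proof -
      have "harm m / C = (\<Sum>i<m. 1 / (real (Suc i) * C))"
        unfolding harm_altdef by (simp add: sum_distrib_right divide_inverse)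
      also have "\<dots> \<le> (\<Sum>i<m. 1 / z (Suc i))"
        by (intro sum_mono divide_left_mono) (use zC pos C in \<open>auto intro!: mult_pos_pos\<close>)
      also have "\<dots> = E 0 - E m" using Esum by simp
      also have "\<dots> \<le> E 0" using Enn[of m] by simp
      finally show ?thesis .
    qed
    define m where "m = nat \<lceil>exp (C * E 0)\<rceil>"
    have "exp (C * E 0) \<le> real m" unfolding m_def by linarith
    then have "exp (C * E 0) < real m + 1" by simp
    then have "exp (C * E 0) < exp (ln (real m + 1))" by simp
    then have "C * E 0 < ln (real m + 1)" by (simp only: exp_less_cancel_iff)
    also have "\<dots> \<le> harm m" by (rule ln_le_harm)
    also have "\<dots> \<le> C * E 0" using hb[of m] C by (simp add: field_simps)
    finally show False by simp
  qed
qed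

lemma no_pos_forever:
  assumes r: "recur y" and pos: "\<forall>n\<ge>N. y n > 0"
  shows False
proof -
  define z where "z k = y (N + int k)" for k
  have "\<forall>k. z (k+2) + z k = 2 * z (k+1) - 1 / z (k+1)"
  proof
    fix k
    have "y ((N + int k + 1) + 1) + y ((N + int k + 1) - 1) = 2 * y (N + int k + 1) - 1 / y (N + int k + 1)"
      using r unfolding recur_def by blast
    then show "z (k+2) + z k = 2 * z (k+1) - 1 / z (k+1)" unfolding z_def by (simp add: algebra_simps)
  qed
  moreover have "\<forall>k. z k > 0" unfolding z_def using pos by simp
  ultimately show False by (rule no_pos_forever_nat)
qed

lemma exists_neg_after:
  assumes "recur y" "\<forall>n. y n \<noteq> 0"
  shows "\<exists>n\<ge>N. y n < 0"
  using no_pos_forever[OF assms(1), of N] assms(2) by (meson linorder_neqE_linordered_idom)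

lemma exists_pos_after:
  assumes "recur y" "\<forall>n. y n \<noteq> 0"
  shows "\<exists>n\<ge>N. y n > 0"
  using exists_neg_after[OF recur_neg[OF assms(1)], of N] assms(2) by auto

lemma transition:
  assumes nz: "\<forall>n. y n \<noteq> (0::real)"
  shows "y p > 0 \<Longrightarrow> y (p + int k) < 0 \<Longrightarrow> \<exists>e. p \<le> e \<and> e < p + int k \<and> y e > 0 \<and> y (e+1) < 0"
proof (induction k arbitrary: p)
  case 0 then show ?case by simp
next
  case (Suc k)
  show ?case
  proof (cases "y (p+1) < 0")
    case True then show ?thesis using Suc.prems by (intro exI[of _ p]) auto
  next
    case False
    then have "y (p+1) > 0" using nz by (meson linorder_neqE_linordered_idom)
    moreover have "y (p + 1 + int k) < 0" using Suc.prems by (simp add: algebra_simps)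
    ultimately obtain e where "p + 1 \<le> e \<and> e < p + 1 + int k \<and> y e > 0 \<and> y (e+1) < 0"
      using Suc.IH by blast
    then show ?thesis by (intro exI[of _ e]) auto
  qed
qed

lemma run_end:
  fixes y :: "int \<Rightarrow> real" and N :: int and \<kappa> :: real
  assumes r: "recur y" and nz: "\<forall>n. y n \<noteq> 0" and kp: "\<kappa> > 0"
  shows "\<exists>e\<ge>N. 0 < y e \<and> y e \<le> \<kappa> * e"
proof -
  define N1 where "N1 = max N (max 1 \<lceil>2 / \<kappa>^2\<rceil>)"
  obtain j1 where j1: "j1 \<ge> N1" "y j1 < 0" using exists_neg_after[OF r nz] by blast
  obtain j2 where j2: "j2 \<ge> j1" "y j2 > 0" using exists_pos_after[OF r nz] by blast
  obtain j3 where j3: "j3 \<ge> j2" "y j3 < 0" using exists_neg_after[OF r nz] by blast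
  have "y (j2 + int (nat (j3 - j2))) < 0" using j3 by simp
  then obtain e where e: "j2 \<le> e" "y e > 0" "y (e+1) < 0"
    using transition[OF nz, of j2 "nat (j3 - j2)"] j2 by auto
  have eN1: "e \<ge> N1" using e j1 j2 by simp
  have e1: "e \<ge> 1" "real_of_int e \<ge> 2 / \<kappa>^2" using eN1 unfolding N1_def by linarith+
  have ej1: "j1 < e" using j1 j2 e by (cases "j1 = j2") auto
  show ?thesis
  proof (rule exI[of _ e], intro conjI)
    show "N \<le> e" using eN1 unfolding N1_def by simp
    show "0 < y e" by (rule e(2))
    show "y e \<le> \<kappa> * e"
    proof (rule ccontr)
      assume "\<not> ?thesis"
      then have big: "y e > \<kappa> * e" by simp
      define \<sigma> where "\<sigma> = y e - y (e+1)"
      have sig: "\<sigma> > y e" unfolding \<sigma>_def using e by simp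
      have ye: "y e > 0" by (rule e(2))
      have "\<kappa> * e \<ge> \<kappa> * (2 / \<kappa>^2)" using e1 kp by (intro mult_left_mono) auto
      also have "\<kappa> * (2 / \<kappa>^2) = 2 / \<kappa>" using kp by (simp add: power2_eq_square)
      finally have ke: "\<kappa> * e \<ge> 2 / \<kappa>" .
      have eye: "e / y e < 1 / \<kappa>"
        using big kp e1 ye by (simp add: field_simps)
      have key: "(k+1) / y e < \<sigma>" if "k + 1 \<le> e" for k :: int
      proof -
        have "(k+1) / y e \<le> e / y e" using that ye by (simp add: divide_right_mono)
        also have "\<dots> < 1 / \<kappa>" by (rule eye)
        also have "\<dots> < 2 / \<kappa>" using kp by (simp add: divide_strict_right_mono)
        also have "\<dots> \<le> \<kappa> * e" by (rule ke)
        also have "\<dots> < \<sigma>" using big sig by simp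
        finally show ?thesis .
      qed
      have rec: "y m - y (m - 1) = y (m+1) - y m + 1 / y m" for m
      proof -
        have "y (m+1) + y (m-1) = 2 * y m - 1 / y m" using r unfolding recur_def by blast
        then show ?thesis by linarith
      qed
      have claim: "int k \<le> e - j1 \<longrightarrow> y (e - int k) \<ge> y e \<and> y (e - int k) - y (e - int k - 1) \<le> - \<sigma> + (int k + 1) / y e" for k :: nat
      proof (induction k)
        case 0
        show ?case using rec[of e] unfolding \<sigma>_def by simp
      next
        case (Suc k)
        show ?case
        proof
          assume h: "int (Suc k) \<le> e - j1"
          then have ih: "y (e - int k) \<ge> y e" "y (e - int k) - y (e - int k - 1) \<le> - \<sigma> + (int k + 1) / y e"
            using Suc.IH by auto
          have "int k + 1 \<le> e" using h j1 eN1 e1 unfolding N1_def by linarith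
          then have kk: "(int k + 1) / y e < \<sigma>" using key[of "int k"] by simp
          have A: "y (e - int k - 1) \<ge> y e" using ih kk by linarith
          have B: "1 / y (e - int k - 1) \<le> 1 / y e" using A ye by (intro divide_left_mono) auto
          have "y (e - int k - 1) - y (e - int k - 1 - 1) = y (e - int k) - y (e - int k - 1) + 1 / y (e - int k - 1)"
            using rec[of "e - int k - 1"] by simp
          also have "\<dots> \<le> - \<sigma> + (int k + 1) / y e + 1 / y e" using ih B by simp
          also have "\<dots> = - \<sigma> + (int (Suc k) + 1) / y e" by (simp add: add_divide_distrib)
          finally show "y (e - int (Suc k)) \<ge> y e \<and> y (e - int (Suc k)) - y (e - int (Suc k) - 1) \<le> - \<sigma> + (int (Suc k) + 1) / y e"
            using A by (simp add: algebra_simps)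
        qed
      qed
      have "y (e - int (nat (e - j1))) \<ge> y e" using claim[of "nat (e - j1)"] ej1 by simp
      then have "y j1 \<ge> y e" using ej1 by simp
      then show False using j1 ye by simp
    qed
  qed
qed

lemma Nop_neg: "Nop (\<lambda>n. - z n) n = - Nop z n"
  unfolding Nop_def by simp

lemma win_eq:
  fixes lo hi x z :: int
  assumes "lo \<le> x" "x \<le> hi" "lo \<le> z" "z \<le> hi" "(x - z) mod (hi - lo + 1) = 0"
  shows "x = z"
proof -
  let ?P = "hi - lo + 1"
  have "?P dvd ((x - lo) - (z - lo))" using assms(5) by (simp add: dvd_eq_mod_eq_0)
  then have "(x - lo) mod ?P = (z - lo) mod ?P" by (simp add: mod_eq_dvd_iff)
  moreover have "(x - lo) mod ?P = x - lo" using assms by (intro mod_pos_pos_trivial) auto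
  moreover have "(z - lo) mod ?P = z - lo" using assms by (intro mod_pos_pos_trivial) auto
  ultimately show ?thesis by simp
qed

definition repr :: "int \<Rightarrow> int \<Rightarrow> int \<Rightarrow> int" where
  "repr lo hi n = lo + (n - lo) mod (hi - lo + 1)"

lemma repr_bounds: "lo \<le> hi \<Longrightarrow> lo \<le> repr lo hi n \<and> repr lo hi n \<le> hi"
  unfolding repr_def using pos_mod_sign[of "hi - lo + 1" "n - lo"] pos_mod_bound[of "hi - lo + 1" "n - lo"] by auto

lemma repr_id: "lo \<le> k \<Longrightarrow> k \<le> hi \<Longrightarrow> repr lo hi k = k"
  unfolding repr_def by (subst mod_pos_pos_trivial) auto

lemma repr_cong: "(repr lo hi n - n) mod (hi - lo + 1) = 0"
proof -
  have "repr lo hi n - n = (n - lo) mod (hi - lo + 1) - (n - lo)" unfolding repr_def by simp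
  also have "\<dots> = - ((hi - lo + 1) * ((n - lo) div (hi - lo + 1)))" by (simp add: minus_div_mult_eq_mod[symmetric])
  finally show ?thesis by simp
qed

lemma repr_per: "repr lo hi (n + (hi - lo + 1)) = repr lo hi n"
proof -
  have "n + (hi - lo + 1) - lo = (n - lo) + (hi - lo + 1)" by simp
  then show ?thesis unfolding repr_def by (metis mod_add_self2)
qed

lemma repr_shift: "(repr lo hi (n + d) - (repr lo hi n + d)) mod (hi - lo + 1) = 0"
proof -
  have a: "(hi - lo + 1) dvd (repr lo hi (n + d) - (n + d))" using repr_cong[of lo hi "n+d"] by (simp add: dvd_eq_mod_eq_0)
  have b: "(hi - lo + 1) dvd (repr lo hi n - n)" using repr_cong[of lo hi n] by (simp add: dvd_eq_mod_eq_0)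
  have "(hi - lo + 1) dvd ((repr lo hi (n + d) - (n + d)) - (repr lo hi n - n))" using a b by (rule dvd_diff)
  then show ?thesis by (simp add: dvd_eq_mod_eq_0 algebra_simps)
qed

lemma sub_construct:
  fixes y :: "int \<Rightarrow> real" and lo hi ma ka P :: int and \<epsilon> \<kappa> M \<delta> :: real and u C a :: "int \<Rightarrow> real"
  assumes r: "recur y" and nz: "\<forall>n. y n \<noteq> 0"
    and win: "lo \<le> ma" "ma < -1" "0 < ka" "ka \<le> hi"
    and eps: "\<epsilon> > 0" and kap: "\<kappa> > 0" "\<kappa> \<le> \<epsilon> / (\<bar>y (-1)\<bar> * (\<bar>y (-1)\<bar> + \<epsilon>))"
       "\<kappa> \<le> \<epsilon> / (\<bar>y 0\<bar> * (\<bar>y 0\<bar> + \<epsilon>))"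
    and edges: "y ma > 0" "y ma \<le> \<epsilon> + \<kappa> * of_int (-1 - ma)" "y ka > 0" "y ka \<le> \<epsilon> + \<kappa> * of_int ka"
    and M: "M \<ge> (of_int (hi - lo + 1))^2 + 1"
    and dl: "\<delta> > 0" "\<delta> \<le> 1 / (2 * M + 2)"
  assumes P_def: "P = hi - lo + 1"
    and u_def: "u = (\<lambda>n::int. \<epsilon> + \<kappa> * (if n \<ge> 0 then of_int n else of_int (-1 - n)))"
    and C_def: "C = (\<lambda>n. if y (repr lo hi n) > 0 then \<delta> else - M + (of_int ((repr lo hi n - ka) mod P))^2)"
    and a_def: "a = (\<lambda>n. if ma < repr lo hi n \<and> repr lo hi n < ka then max (C n) (y (repr lo hi n) - u (repr lo hi n)) else C n)"
  shows "(\<forall>n. a (n + P) = a n) \<and> (\<forall>n. Nop a n \<le> 0) \<and> a (-1) \<ge> y (-1) - \<epsilon> \<and> a 0 \<ge> y 0 - \<epsilon> \<and>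
     (\<forall>n. y (repr lo hi n) > 0 \<longrightarrow> \<delta> \<le> a n \<and> a n \<le> max \<delta> (y (repr lo hi n))) \<and>
     (\<forall>n. y (repr lo hi n) < 0 \<longrightarrow> a n \<le> max (- M + (of_int P)^2) (y (repr lo hi n)))"
proof -
  let ?R = "repr lo hi"
  have P: "P > 0" "lo \<le> hi" using win unfolding P_def by auto
  have Rb: "lo \<le> ?R n" "?R n \<le> hi" for n using repr_bounds[OF P(2)] by auto
  have Rid: "lo \<le> k \<Longrightarrow> k \<le> hi \<Longrightarrow> ?R k = k" for k by (rule repr_id)
  have Rper: "?R (n + P) = ?R n" for n unfolding P_def by (rule repr_per)
  have aper: "a (n + P) = a n" for n unfolding a_def C_def Rper ..
  have Mge: "M \<ge> 1" using M by (smt (verit) zero_le_power2)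
  have PM: "(of_int P)^2 \<le> M - 1" using M unfolding P_def by simp
  have qb: "0 \<le> (x::int) mod P" "x mod P < P" for x using P by auto
  have qsq: "(of_int (x mod P))^2 \<le> M - 1" for x :: int
  proof -
    have "(of_int (x mod P) :: real)^2 \<le> (of_int P)^2"
      using qb[of x] by (intro power_mono) auto
    then show ?thesis using PM by simp
  qed
  have Cge: "C n \<ge> - M" for n unfolding C_def using dl Mge by auto
  have Cle: "C n \<le> a n" for n unfolding a_def by auto
  have upos: "u n \<ge> \<epsilon>" for n unfolding u_def using kap by auto
  have d1: "\<delta> \<le> 1" using dl Mge by (smt (verit, ccfv_SIG) divide_le_eq_1_pos)
  have keyR: "Nop a k \<le> 0" if k: "lo \<le> k" "k \<le> hi" for k
  proof -
    have Rk: "?R k = k" using Rid k by simp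
    show ?thesis
    proof (cases "ma < k \<and> k < ka \<and> C k < y k - u k")
      case False
      then have ak: "a k = C k" unfolding a_def Rk by auto
      have "Nop a k \<le> Nop C k" unfolding Nop_def ak using Cle[of "k+1"] Cle[of "k-1"] by simp
      also have "Nop C k \<le> 0"
      proof (cases "y k > 0")
        case True
        then have Ck: "C k = \<delta>" unfolding C_def Rk by simp
        have "Nop C k \<le> 2 * \<delta> + 2 * M - 1 / \<delta>" unfolding Nop_def Ck using Cge[of "k+1"] Cge[of "k-1"] by simp
        also have "\<dots> \<le> 0"
        proof -
          have "\<delta> * (2 * M + 2) \<le> 1" using dl Mge by (simp add: field_simps)
          then have "\<delta> * (2 * \<delta> + 2 * M) \<le> 1" using d1 dl
            by (smt (verit, best) mult_left_mono)
          then have "2 * \<delta> + 2 * M \<le> 1 / \<delta>" using dl by (simp add: field_simps)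
          then show ?thesis by simp
        qed
        finally show ?thesis .
      next
        case False
        then have yk: "y k < 0" using nz by (meson linorder_neqE_linordered_idom)
        define q where "q = (k - ka) mod P"
        have Ck: "C k = - M + (of_int q)^2" unfolding C_def Rk q_def using yk by simp
        have q0: "q \<noteq> 0"
        proof
          assume "q = 0"
          then have "k = ka" using win_eq[of lo k hi ka] k win unfolding q_def P_def by auto
          then show False using yk edges by simp
        qed
        have qr: "0 \<le> q" "q < P" using qb unfolding q_def by auto
        have qsq': "(of_int q :: real)^2 \<le> M - 1" unfolding q_def by (rule qsq)
        have Cp: "C (k+1) \<ge> - M + (of_int (q + 1))^2"
        proof (cases "y (?R (k+1)) > 0")
          case True
          have "(of_int (q+1) :: real)^2 \<le> (of_int P)^2" using qr by (intro power_mono) auto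
          then show ?thesis unfolding C_def using True PM dl by simp
        next
          case False
          have sh: "(?R (k+1) - ka) mod P = (q + 1) mod P"
          proof -
            have "(?R (k+1) - (?R k + 1)) mod P = 0" using repr_shift[of lo hi k 1] unfolding P_def by simp
            then have "P dvd ((?R (k+1) - ka) - (k - ka + 1))" unfolding Rk by (simp add: dvd_eq_mod_eq_0 algebra_simps)
            then have "(?R (k+1) - ka) mod P = (k - ka + 1) mod P" by (simp add: mod_eq_dvd_iff)
            also have "\<dots> = (q + 1) mod P" unfolding q_def by (simp add: mod_add_left_eq)
            finally show ?thesis .
          qed
          have "q + 1 < P"
          proof (rule ccontr)
            assume "\<not> q + 1 < P"
            then have "q + 1 = P" using qr by simp
            then have "(?R (k+1) - ka) mod P = 0" using sh by simp
            then have "?R (k+1) = ka" using win_eq[of lo "?R (k+1)" hi ka] Rb win unfolding P_def by auto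
            then show False using False edges by simp
          qed
          then have "(?R (k+1) - ka) mod P = q + 1" using sh qr by simp
          then show ?thesis unfolding C_def using False by simp
        qed
        have Cm: "C (k-1) \<ge> - M + (of_int (q - 1))^2"
        proof (cases "y (?R (k-1)) > 0")
          case True
          have "(of_int (q-1) :: real)^2 \<le> (of_int P)^2" using qr q0 by (intro power_mono) auto
          then show ?thesis unfolding C_def using True PM dl by simp
        next
          case False
          have sh: "(?R (k-1) - ka) mod P = (q - 1) mod P"
          proof -
            have "(?R (k + -1) - (?R k + -1)) mod P = 0" using repr_shift[of lo hi k "-1"] unfolding P_def by simp
            then have "P dvd ((?R (k-1) - ka) - (k - ka - 1))" unfolding Rk by (simp add: dvd_eq_mod_eq_0 algebra_simps)
            then have "(?R (k-1) - ka) mod P = (k - ka - 1) mod P" by (simp add: mod_eq_dvd_iff)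
            also have "\<dots> = (q - 1) mod P" unfolding q_def by (simp add: mod_diff_left_eq)
            finally show ?thesis .
          qed
          then have "(?R (k-1) - ka) mod P = q - 1" using qr q0 by simp
          then show ?thesis unfolding C_def using False by simp
        qed
        have Mq: "M - (of_int q)^2 \<ge> 1" using qsq' by simp
        have "Nop C k = 2 * (- M + (of_int q)^2) - C (k+1) - C (k-1) + 1 / (M - (of_int q)^2)"
          unfolding Nop_def Ck by (simp add: minus_divide_right)
        also have "\<dots> \<le> 2 * (- M + (of_int q)^2) - (- M + (of_int (q + 1))^2) - (- M + (of_int (q - 1))^2) + 1 / (M - (of_int q)^2)"
          using Cp Cm by simp
        also have "\<dots> = -2 + 1 / (M - (of_int q)^2)" by (simp add: power2_eq_square algebra_simps)
        also have "\<dots> \<le> -2 + 1" using Mq by simp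
        finally show ?thesis by simp
      qed
      finally show ?thesis .
    next
      case True
      then have kin: "ma < k" "k < ka" and big: "C k < y k - u k" by auto
      have ak: "a k = y k - u k" unfolding a_def Rk using True by simp
      have nb: "a j \<ge> y j - u j" if "ma \<le> j" "j \<le> ka" for j
      proof -
        have Rj: "?R j = j" using Rid that win by simp
        show ?thesis
        proof (cases "ma < j \<and> j < ka")
          case True then show ?thesis unfolding a_def Rj by simp
        next
          case False
          then have "j = ma \<or> j = ka" using that by auto
          then have "y j - u j \<le> 0"
            using edges unfolding u_def using win by auto
          moreover have "C j = \<delta>" unfolding C_def Rj using \<open>j = ma \<or> j = ka\<close> edges by auto
          ultimately show ?thesis using Cle[of j] dl by simp
        qed
      qed
      have n1: "a (k+1) \<ge> y (k+1) - u (k+1)" using nb kin by simp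
      have n2: "a (k-1) \<ge> y (k-1) - u (k-1)" using nb kin by simp
      have rk: "y (k+1) + y (k-1) = 2 * y k - 1 / y k" using r unfolding recur_def by blast
      have ykn: "y k \<noteq> 0" using nz by simp
      have sgn: "y k * (y k - u k) > 0"
      proof (cases "y k > 0")
        case True
        then have "C k = \<delta>" unfolding C_def Rk by simp
        then have "y k - u k > 0" using big dl by simp
        then show ?thesis using True by simp
      next
        case False
        then have "y k < 0" using ykn by simp
        moreover have "y k - u k < 0" using \<open>y k < 0\<close> upos[of k] eps by simp
        ultimately show ?thesis by (simp add: mult_neg_neg)
      qed
      have lapl: "u (k+1) + u (k-1) - 2 * u k = (if k = 0 \<or> k = -1 then \<kappa> else 0)"
        unfolding u_def by (auto simp: algebra_simps)
      have ukpos: "u k > 0" using upos[of k] eps by simp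
      have main: "u (k+1) + u (k-1) - 2 * u k \<le> u k / (y k * (y k - u k))"
      proof (cases "k = 0 \<or> k = -1")
        case False
        then show ?thesis unfolding lapl using ukpos sgn by simp
      next
        case True
        then have uk: "u k = \<epsilon>" unfolding u_def by auto
        have kb: "\<kappa> \<le> \<epsilon> / (\<bar>y k\<bar> * (\<bar>y k\<bar> + \<epsilon>))" using True kap by auto
        have "y k * (y k - \<epsilon>) \<le> \<bar>y k\<bar> * (\<bar>y k\<bar> + \<epsilon>)"
          using eps by (cases "y k \<ge> 0") (auto simp: algebra_simps)
        then have "\<epsilon> / (\<bar>y k\<bar> * (\<bar>y k\<bar> + \<epsilon>)) \<le> \<epsilon> / (y k * (y k - \<epsilon>))"
          using sgn uk eps by (intro divide_left_mono) auto
        moreover have L: "u (k+1) + u (k-1) - 2 * u k = \<kappa>" using lapl True by simp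
        ultimately show ?thesis unfolding L uk using kb by linarith
      qed
      have "Nop a k \<le> 2 * (y k - u k) - (y (k+1) - u (k+1)) - (y (k-1) - u (k-1)) - 1 / (y k - u k)"
        unfolding Nop_def ak using n1 n2 by simp
      also have "\<dots> = 1 / y k + (u (k+1) + u (k-1) - 2 * u k) - 1 / (y k - u k)"
        using rk by (simp add: algebra_simps)
      also have "\<dots> \<le> 1 / y k + u k / (y k * (y k - u k)) - 1 / (y k - u k)" using main by simp
      also have "\<dots> = 0"
      proof -
        have "y k - u k \<noteq> 0" using sgn by auto
        then show ?thesis using ykn by (simp add: field_simps)
      qed
      finally show ?thesis .
    qed
  qed
  have Nall: "Nop a n \<le> 0" for n
  proof -
    have c0: "(?R n - n) mod P = 0" using repr_cong[of lo hi n] unfolding P_def .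
    have e0: "a (?R n) = a n" by (rule per_mod[OF _ c0]) (use aper in auto)
    have c1: "((?R n + 1) - (n + 1)) mod P = 0" using c0 by simp
    have e1: "a (?R n + 1) = a (n + 1)" by (rule per_mod[OF _ c1]) (use aper in auto)
    have c2: "((?R n - 1) - (n - 1)) mod P = 0" using c0 by simp
    have e2: "a (?R n - 1) = a (n - 1)" by (rule per_mod[OF _ c2]) (use aper in auto)
    have "Nop a n = Nop a (?R n)" unfolding Nop_def e0 e1 e2 ..
    then show ?thesis using keyR[of "?R n"] Rb by simp
  qed
  have close: "a k \<ge> y k - \<epsilon>" if "k = 0 \<or> k = -1" for k
  proof -
    have Rk: "?R k = k" using Rid that win by auto
    have "u k = \<epsilon>" using that unfolding u_def by auto
    then show ?thesis unfolding a_def Rk using that win by auto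
  qed
  have bpos: "\<delta> \<le> a n \<and> a n \<le> max \<delta> (y (?R n))" if "y (?R n) > 0" for n
  proof -
    have "C n = \<delta>" unfolding C_def using that by simp
    moreover have "y (?R n) - u (?R n) \<le> y (?R n)" using upos[of "?R n"] eps by simp
    ultimately show ?thesis unfolding a_def by auto
  qed
  have bneg: "a n \<le> max (- M + (of_int P)^2) (y (?R n))" if "y (?R n) < 0" for n
  proof -
    have "C n \<le> - M + (of_int P)^2"
    proof -
      have "(of_int ((?R n - ka) mod P) :: real)^2 \<le> (of_int P)^2"
        using qb[of "?R n - ka"] by (intro power_mono) auto
      then show ?thesis unfolding C_def using that by simp
    qed
    moreover have "y (?R n) - u (?R n) \<le> y (?R n)" using upos[of "?R n"] eps by simp
    ultimately show ?thesis unfolding a_def by auto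
  qed
  show ?thesis using aper Nall close[of 0] close[of "-1"] bpos bneg by auto
qed

lemma kappa_bound:
  fixes c S \<epsilon> :: real
  assumes "c \<noteq> 0" "\<epsilon> > 0" "\<bar>c\<bar> + \<epsilon> \<le> S"
  shows "\<epsilon> / S^2 \<le> \<epsilon> / (\<bar>c\<bar> * (\<bar>c\<bar> + \<epsilon>))"
proof -
  have A: "\<bar>c\<bar> * (\<bar>c\<bar> + \<epsilon>) > 0" using assms by (simp add: add_pos_pos)
  have "\<bar>c\<bar> * (\<bar>c\<bar> + \<epsilon>) \<le> S * S" using assms by (intro mult_mono) auto
  then show ?thesis using A assms(2) by (intro divide_left_mono) (auto simp: power2_eq_square)
qed

lemma construct:
  fixes y :: "int \<Rightarrow> real" and \<epsilon> :: real
  assumes r: "recur y" and nz: "\<forall>n. y n \<noteq> 0" and eps: "\<epsilon> > 0"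
  shows "\<exists>s P. P > 0 \<and> (\<forall>n. s (n + P) = s n) \<and> recur s \<and> (\<forall>n. s n \<noteq> 0)
     \<and> \<bar>s (-1) - y (-1)\<bar> \<le> \<epsilon> \<and> \<bar>s 0 - y 0\<bar> \<le> \<epsilon>"
proof -
  define \<kappa> where "\<kappa> = \<epsilon> / (\<bar>y (-1)\<bar> + \<bar>y 0\<bar> + \<epsilon>)^2"
  have kp: "\<kappa> > 0" unfolding \<kappa>_def using eps nz by (simp add: add_pos_pos)
  have k1: "\<kappa> \<le> \<epsilon> / (\<bar>y (-1)\<bar> * (\<bar>y (-1)\<bar> + \<epsilon>))"
    unfolding \<kappa>_def using nz eps by (intro kappa_bound) auto
  have k0: "\<kappa> \<le> \<epsilon> / (\<bar>y 0\<bar> * (\<bar>y 0\<bar> + \<epsilon>))"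
    unfolding \<kappa>_def using nz eps by (intro kappa_bound) auto
  have nz': "\<forall>n. - y n \<noteq> 0" using nz by simp
  have nzr: "\<forall>n. y (-1 - n) \<noteq> 0" using nz by simp
  have nzr': "\<forall>n. - y (-1 - n) \<noteq> 0" using nz by simp
  obtain ka where ka: "ka \<ge> 1" "0 < y ka" "y ka \<le> \<kappa> * ka" using run_end[OF r nz kp, of 1] by auto
  obtain ea where ea: "ea \<ge> 1" "0 < y (-1 - ea)" "y (-1 - ea) \<le> \<kappa> * ea"
    using run_end[OF recur_rev[OF r] nzr kp, of 1] by auto
  obtain kb where kb: "kb \<ge> 1" "0 < - y kb" "- y kb \<le> \<kappa> * kb" using run_end[OF recur_neg[OF r] nz' kp, of 1] by auto
  obtain eb where eb: "eb \<ge> 1" "0 < - y (-1 - eb)" "- y (-1 - eb) \<le> \<kappa> * eb"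
    using run_end[OF recur_neg[OF recur_rev[OF r]] nzr' kp, of 1] by auto
  define ma where "ma = -1 - ea"
  define mb where "mb = -1 - eb"
  define lo where "lo = min ma mb"
  define hi where "hi = max ka kb"
  define P where "P = hi - lo + 1"
  have P: "P > 0" unfolding P_def lo_def hi_def ma_def mb_def using ka kb ea eb by auto
  define Y where "Y = (\<Sum>j\<in>{lo..hi}. \<bar>y j\<bar>)"
  have Yb: "\<bar>y j\<bar> \<le> Y" if "lo \<le> j" "j \<le> hi" for j
    unfolding Y_def using that by (intro member_le_sum) auto
  define M where "M = (of_int P)^2 + 1 + Y"
  have Yn: "Y \<ge> 0" unfolding Y_def by (simp add: sum_nonneg)
  have M: "M \<ge> (of_int (hi - lo + 1))^2 + 1" unfolding M_def P_def using Yn by simp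
  define dmin where "dmin = Min ((\<lambda>j. \<bar>y j\<bar>) ` {lo..hi})"
  have dmin: "dmin > 0" unfolding dmin_def
    using nz P unfolding P_def by (subst Min_gr_iff) auto
  have dminle: "dmin \<le> \<bar>y j\<bar>" if "lo \<le> j" "j \<le> hi" for j
    unfolding dmin_def using that by (intro Min_le) auto
  define \<delta> where "\<delta> = min (1 / (2 * M + 2)) dmin"
  have Mpos: "M \<ge> 1" using M by (smt (verit) zero_le_power2)
  have dl: "\<delta> > 0" "\<delta> \<le> 1 / (2 * M + 2)" unfolding \<delta>_def using dmin Mpos by auto
  have dle: "\<delta> \<le> \<bar>y j\<bar>" if "lo \<le> j" "j \<le> hi" for j
    using dminle[OF that] unfolding \<delta>_def by linarith
  define u where "u = (\<lambda>n::int. \<epsilon> + \<kappa> * (if n \<ge> 0 then of_int n else of_int (-1 - n)))"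
  define C1 where "C1 = (\<lambda>n. if y (repr lo hi n) > 0 then \<delta> else - M + (of_int ((repr lo hi n - ka) mod P))^2)"
  define a where "a = (\<lambda>n. if ma < repr lo hi n \<and> repr lo hi n < ka then max (C1 n) (y (repr lo hi n) - u (repr lo hi n)) else C1 n)"
  define C2 where "C2 = (\<lambda>n. if - y (repr lo hi n) > 0 then \<delta> else - M + (of_int ((repr lo hi n - kb) mod P))^2)"
  define a' where "a' = (\<lambda>n. if mb < repr lo hi n \<and> repr lo hi n < kb then max (C2 n) (- y (repr lo hi n) - u (repr lo hi n)) else C2 n)"
  have A: "(\<forall>n. a (n + P) = a n) \<and> (\<forall>n. Nop a n \<le> 0) \<and> a (-1) \<ge> y (-1) - \<epsilon> \<and> a 0 \<ge> y 0 - \<epsilon> \<and>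
     (\<forall>n. y (repr lo hi n) > 0 \<longrightarrow> \<delta> \<le> a n \<and> a n \<le> max \<delta> (y (repr lo hi n))) \<and>
     (\<forall>n. y (repr lo hi n) < 0 \<longrightarrow> a n \<le> max (- M + (of_int P)^2) (y (repr lo hi n)))"
    apply (rule sub_construct[OF r nz _ _ _ _ eps kp k1 k0 _ _ _ _ M dl P_def u_def C1_def a_def])
    using ka ea eps unfolding lo_def hi_def ma_def by auto
  have A': "(\<forall>n. a' (n + P) = a' n) \<and> (\<forall>n. Nop a' n \<le> 0) \<and> a' (-1) \<ge> - y (-1) - \<epsilon> \<and> a' 0 \<ge> - y 0 - \<epsilon> \<and>
     (\<forall>n. - y (repr lo hi n) > 0 \<longrightarrow> \<delta> \<le> a' n \<and> a' n \<le> max \<delta> (- y (repr lo hi n))) \<and>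
     (\<forall>n. - y (repr lo hi n) < 0 \<longrightarrow> a' n \<le> max (- M + (of_int P)^2) (- y (repr lo hi n)))"
    apply (rule sub_construct[OF recur_neg[OF r] nz' _ _ _ _ eps kp _ _ _ _ _ _ M dl P_def u_def _ a'_def])
    using kb eb k1 k0 eps unfolding lo_def hi_def mb_def C2_def by auto
  define b where "b = (\<lambda>n. - a' n)"
  have Rb: "lo \<le> repr lo hi n \<and> repr lo hi n \<le> hi" for n
    using repr_bounds[of lo hi n] P unfolding P_def by auto
  have ab: "a n \<le> b n" for n
  proof -
    let ?r = "repr lo hi n"
    have yb: "\<bar>y ?r\<bar> \<le> Y" "\<delta> \<le> \<bar>y ?r\<bar>" using Yb dle Rb[of n] by auto
    have mp: "- M + (of_int P)^2 = - 1 - Y" unfolding M_def by simp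
    show ?thesis
    proof (cases "y ?r > 0")
      case True
      have "a n \<le> y ?r" using A True yb by auto
      moreover have "a' n \<le> - y ?r" using A' True yb mp by auto
      ultimately show ?thesis unfolding b_def by simp
    next
      case False
      then have neg: "y ?r < 0" using nz by (meson linorder_neqE_linordered_idom)
      have "a n \<le> y ?r" using A neg yb mp by auto
      moreover have "a' n \<le> - y ?r" using A' neg yb by auto
      ultimately show ?thesis unfolding b_def by simp
    qed
  qed
  have sg: "a n > 0 \<or> b n < 0" for n
  proof (cases "y (repr lo hi n) > 0")
    case True then show ?thesis using A dl by force
  next
    case False
    then have "- y (repr lo hi n) > 0" using nz by (meson linorder_neqE_linordered_idom neg_0_less_iff_less)
    then show ?thesis using A' dl unfolding b_def by force
  qed
  have pb: "\<forall>n. b (n + P) = b n" unfolding b_def using A' by simp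
  have sb: "\<forall>n. Nop b n \<ge> 0" unfolding b_def Nop_neg using A' by simp
  obtain s where s: "\<forall>n. s (n + P) = s n" "\<forall>n. a n \<le> s n \<and> s n \<le> b n" "recur s"
    using sandwich[OF P _ pb _ _ _ sb] A ab sg by blast
  have snz: "\<forall>n. s n \<noteq> 0"
  proof
    fix n show "s n \<noteq> 0" using sg[of n] s(2) by (metis less_le_trans order_less_irrefl order_le_less_trans)
  qed
  have c1: "\<bar>s (-1) - y (-1)\<bar> \<le> \<epsilon>"
  proof -
    have "a (-1) \<le> s (-1)" "s (-1) \<le> - a' (-1)" using s(2) unfolding b_def by auto
    then show ?thesis using A A' by linarith
  qed
  have c0: "\<bar>s 0 - y 0\<bar> \<le> \<epsilon>"
  proof -
    have "a 0 \<le> s 0" "s 0 \<le> - a' 0" using s(2) unfolding b_def by auto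
    then show ?thesis using A A' by linarith
  qed
  show ?thesis
    apply (rule exI[of _ s], rule exI[of _ P])
    using P s snz c1 c0 by auto
qed

lemma open_from_ev:
  assumes "\<forall>x\<in>S. eventually (\<lambda>y. y \<in> S) (nhds x)"
  shows "open S"
proof (subst open_subopen, intro ballI)
  fix x assume "x \<in> S"
  then obtain T where "open T" "x \<in> T" "\<forall>y\<in>T. y \<in> S" using assms eventually_nhds by metis
  then show "\<exists>T. open T \<and> x \<in> T \<and> T \<subseteq> S" by blast
qed

lemma iter_cont: "(\<forall>i<n. snd ((HD^^i) p) \<noteq> 0) \<Longrightarrow> isCont (HD^^n) p"
  using iter_deriv[of n p] has_derivative_continuous by blast

lemma rho_rho: "rho (rho p) = p" unfolding rho_def by simp

lemma rho_cont: "isCont rho p"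
  unfolding rho_def by (intro continuous_intros)

lemma ev_nz:
  assumes "isCont g p" "g p \<noteq> (0::real)"
  shows "eventually (\<lambda>q. g q \<noteq> 0) (nhds p)"
proof -
  have "eventually (\<lambda>q. g q \<noteq> 0) (at p)"
    using assms unfolding isCont_def by (rule tendsto_imp_eventually_ne)
  then show ?thesis using assms(2) by (simp add: eventually_nhds_conv_at)
qed

definition Gk :: "nat \<Rightarrow> (real \<times> real) set" where
  "Gk k = {p. \<forall>i<k. snd ((HD^^i) p) \<noteq> 0 \<and> snd ((HD^^i) (rho p)) \<noteq> 0}"

lemma Gk_open: "open (Gk k)"
proof (rule open_from_ev, intro ballI)
  fix p assume p: "p \<in> Gk k"
  have "eventually (\<lambda>q. snd ((HD^^i) q) \<noteq> 0 \<and> snd ((HD^^i) (rho q)) \<noteq> 0) (nhds p)" if i: "i < k" for i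
  proof -
    have c1: "isCont (\<lambda>q. snd ((HD^^i) q)) p"
      using iter_cont[of i p] p i unfolding Gk_def by (auto intro: continuous_intros)
    have c2: "isCont (\<lambda>q. snd ((HD^^i) (rho q))) p"
    proof -
      have "isCont (HD^^i) (rho p)" using iter_cont[of i "rho p"] p i unfolding Gk_def by auto
      then have "isCont (\<lambda>q. (HD^^i) (rho q)) p" using rho_cont by (rule isCont_o2[rotated])
      then show ?thesis by (auto intro: continuous_intros)
    qed
    have "eventually (\<lambda>q. snd ((HD^^i) q) \<noteq> 0) (nhds p)" using ev_nz[OF c1] p i unfolding Gk_def by auto
    moreover have "eventually (\<lambda>q. snd ((HD^^i) (rho q)) \<noteq> 0) (nhds p)" using ev_nz[OF c2] p i unfolding Gk_def by auto
    ultimately show ?thesis by (rule eventually_conj)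
  qed
  then have "eventually (\<lambda>q. \<forall>i\<in>{..<k}. snd ((HD^^i) q) \<noteq> 0 \<and> snd ((HD^^i) (rho q)) \<noteq> 0) (nhds p)"
    by (intro eventually_ball_finite) auto
  then show "eventually (\<lambda>q. q \<in> Gk k) (nhds p)" unfolding Gk_def by (rule eventually_mono) auto
qed

lemma NZ:
  assumes V: "open V" "p \<in> V" and orb: "\<forall>q\<in>V. \<forall>i<k. snd ((HD^^i) q) \<noteq> 0"
  shows "\<exists>q\<in>V. snd ((HD^^k) q) \<noteq> 0"
proof (rule ccontr)
  assume "\<not> ?thesis"
  then have z: "\<forall>q\<in>V. snd ((HD^^k) q) = 0" by auto
  obtain a b c d where L: "((HD^^k) has_derivative (\<lambda>h. (a * fst h + b * snd h, c * fst h + d * snd h))) (at p)"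
    and det: "a * d - b * c = 1" using iter_deriv[of k p] orb V by auto
  have D1: "((\<lambda>q. snd ((HD^^k) q)) has_derivative (\<lambda>h. c * fst h + d * snd h)) (at p)"
    using has_derivative_snd[OF L] by simp
  have D2: "((\<lambda>q. snd ((HD^^k) q)) has_derivative (\<lambda>h. 0)) (at p)"
    by (rule has_derivative_transform_within_open[OF has_derivative_const V]) (use z in auto)
  have "(\<lambda>h::real\<times>real. c * fst h + d * snd h) = (\<lambda>h. 0)" by (rule has_derivative_unique[OF D1 D2])
  then have "\<And>h::real\<times>real. c * fst h + d * snd h = 0" by metis
  from this[of "(1,0)"] this[of "(0,1)"] have "c = 0" "d = 0" by auto
  then show False using det by simp
qed

lemma Gk_dense: "UNIV \<subseteq> closure (Gk k)"
proof (induction k)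
  case 0 then show ?case by (simp add: Gk_def)
next
  case (Suc k)
  show ?case
  proof (clarsimp simp: closure_approachable)
    fix x :: "real \<times> real" and e :: real assume e: "e > 0"
    have "x \<in> closure (Gk k)" using Suc by auto
    then obtain q where q: "q \<in> Gk k" "dist q x < e / 2" unfolding closure_approachable
      using e by (meson half_gt_zero)
    obtain r where r: "r > 0" "ball q r \<subseteq> Gk k" using Gk_open[of k] q(1) open_contains_ball by blast
    define V where "V = ball q (min r (e/2))"
    have Vo: "open V" "q \<in> V" unfolding V_def using r e by auto
    have VG: "V \<subseteq> Gk k" unfolding V_def using r by auto
    obtain p1 where p1: "p1 \<in> V" "snd ((HD^^k) p1) \<noteq> 0"
      using NZ[OF Vo] VG unfolding Gk_def by blast
    have c1: "isCont (\<lambda>q. snd ((HD^^k) q)) p1"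
      using iter_cont[of k p1] p1 VG unfolding Gk_def by (auto intro: continuous_intros)
    have ev1: "eventually (\<lambda>z. snd ((HD^^k) z) \<noteq> 0) (nhds p1)" by (rule ev_nz[OF c1 p1(2)])
    have ev2: "eventually (\<lambda>z. z \<in> V) (nhds p1)" using Vo p1 eventually_nhds by blast
    have "eventually (\<lambda>z. z \<in> V \<and> snd ((HD^^k) z) \<noteq> 0) (nhds p1)" using eventually_conj[OF ev2 ev1] .
    then obtain W where W: "open W" "p1 \<in> W" "\<forall>z\<in>W. z \<in> V \<and> snd ((HD^^k) z) \<noteq> 0"
      unfolding eventually_nhds by blast
    define W' where "W' = rho -` W"
    have W'o: "open W'" unfolding W'_def
      using W(1) by (intro open_vimage) (auto intro: continuous_at_imp_continuous_on rho_cont)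
    have W'p: "rho p1 \<in> W'" unfolding W'_def using W rho_rho by simp
    have W'orb: "\<forall>z\<in>W'. \<forall>i<k. snd ((HD^^i) z) \<noteq> 0"
    proof (intro ballI allI impI)
      fix z i assume z: "z \<in> W'" and i: "i < k"
      have "rho z \<in> Gk k" using z W VG unfolding W'_def by auto
      then show "snd ((HD^^i) z) \<noteq> 0" using i rho_rho[of z] unfolding Gk_def by auto
    qed
    obtain z where z: "z \<in> W'" "snd ((HD^^k) z) \<noteq> 0" using NZ[OF W'o W'p W'orb] by blast
    define w where "w = rho z"
    have wW: "w \<in> W" using z unfolding W'_def w_def by simp
    have wG: "w \<in> Gk (Suc k)"
    proof -
      have "w \<in> Gk k" using wW W VG by auto
      moreover have "snd ((HD^^k) w) \<noteq> 0" using wW W by auto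
      moreover have "snd ((HD^^k) (rho w)) \<noteq> 0" using z rho_rho unfolding w_def by simp
      ultimately show ?thesis unfolding Gk_def using less_Suc_eq by auto
    qed
    have "dist w q < e / 2" using wW W unfolding V_def by (auto simp: dist_commute)
    moreover have "dist w x \<le> dist w q + dist q x" by (rule dist_triangle)
    ultimately have "dist w x < e" using q(2) by linarith
    then show "\<exists>y\<in>Gk (Suc k). dist y x < e" using wG by blast
  qed
qed

lemma generic_dense: "UNIV \<subseteq> closure (\<Inter>k. Gk k)"
proof -
  have op: "openin (top_of_set UNIV) T \<and> UNIV \<subseteq> closure T" if Tr: "T \<in> range Gk" for T
  proof -
    obtain k where T: "T = Gk k" using Tr by blast
    have "openin (top_of_set UNIV) (Gk k)" unfolding subtopology_UNIV
      using Gk_open[of k] by (simp only: open_openin)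
    then show ?thesis unfolding T using Gk_dense[of k] by simp
  qed
  have "countable (range Gk)" by (rule countable_image) simp
  then show ?thesis using Baire[OF closed_UNIV _ op] by blast
qed

lemma orb_nz_generic:
  assumes "t \<in> (\<Inter>k. Gk k)"
  shows "\<forall>n. orb t n \<noteq> 0"
proof
  fix n :: int
  show "orb t n \<noteq> 0"
  proof (cases "n \<ge> 0")
    case True
    have "t \<in> Gk (Suc (nat n))" using assms by blast
    then show ?thesis using True unfolding orb_def Gk_def by auto
  next
    case False
    have "t \<in> Gk (Suc (nat (-1-n)))" using assms by blast
    then show ?thesis using False unfolding orb_def Gk_def by auto
  qed
qed

theorem mainTheorem6:
  shows "closure {p. hyperbolic_periodic_point p} = UNIV"
proof -
  have "x \<in> closure {p. hyperbolic_periodic_point p}" for x :: "real \<times> real"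
    unfolding closure_approachable
  proof (intro allI impI)
    fix e :: real assume e: "e > 0"
    have "x \<in> closure (\<Inter>k. Gk k)" using generic_dense by auto
    then obtain t where t: "t \<in> (\<Inter>k. Gk k)" "dist t x < e / 2"
      unfolding closure_approachable using e by (meson half_gt_zero)
    have nz: "\<forall>n. orb t n \<noteq> 0" by (rule orb_nz_generic[OF t(1)])
    have e8: "e / 8 > 0" using e by simp
    obtain s P where s: "P > 0" "\<forall>n. s (n + P) = s n" "recur s" "\<forall>n. s n \<noteq> 0"
      "\<bar>s (-1) - orb t (-1)\<bar> \<le> e / 8" "\<bar>s 0 - orb t 0\<bar> \<le> e / 8"
      using construct[OF orb_recur nz e8] by blast
    define p where "p = (s (-1) - s 0, s 0)"
    have hp: "hyperbolic_periodic_point p"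
      unfolding p_def by (rule periodic_hyperbolic[OF sol_periodic_point[OF s(3) s(4) s(1) s(2)]])
    have d1: "\<bar>fst p - fst t\<bar> \<le> e / 4"
    proof -
      have "fst p - fst t = (s (-1) - (fst t + snd t)) - (s 0 - snd t)" unfolding p_def by simp
      then show ?thesis using s(5,6) unfolding orb_m1 orb_0 by linarith
    qed
    have d2: "\<bar>snd p - snd t\<bar> \<le> e / 8" using s(6) unfolding p_def orb_0 by simp
    have "dist p t = sqrt ((fst p - fst t)^2 + (snd p - snd t)^2)"
      by (metis dist_Pair_Pair dist_real_def power2_abs prod.collapse)
    also have "\<dots> \<le> \<bar>fst p - fst t\<bar> + \<bar>snd p - snd t\<bar>" by (rule sqrt_sum_squares_le_sum_abs)
    also have "\<dots> < e / 2" using d1 d2 e by simp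
    finally have "dist p t < e / 2" .
    moreover have "dist p x \<le> dist p t + dist t x" by (rule dist_triangle)
    ultimately have "dist p x < e" using t(2) by linarith
    then show "\<exists>y\<in>{p. hyperbolic_periodic_point p}. dist y x < e" using hp by blast
  qed
  then show ?thesis by auto
qed

end
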